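(* Let $C>0$ be fixed. If \[\frac{\log(n)+\log(\log(n))+\omega_1(n)}{2n}<p<\frac{\log(n)+\log(\log(n))-\omega_2(n)}{n}\] for some sequences $\omega_1(n),\omega_2(n)\to+\infty$, then a.a.s. $\Gamma\in G(n,p)$ has at least $C$ vertices of valence $1$ that are not on isolated edges.
   Context: $G(n,p)$ is the Erdős–Rényi random graph on $n$ vertices with each edge present independently with probability $p=p(n)$; a.a.s. means with probability tending to $1$ as $n\to\infty$; $\log$ is the natural logarithm. An isolated edge is an edge both of whose endpoints have valence $1$. *)

theory Defs
  imports Complex_Main
begin

text \<open>Simple graphs on the vertex set {0..<n}: a graph is a set of edges,
each edge a 2-element subset of {0..<n}.\<close>

definition all_edges :: "nat \<Rightarrow> nat set set" where
  "all_edges n = {e. e \<subseteq> {..<n} \<and> card e = 2}"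

definition valence :: "nat set set \<Rightarrow> nat \<Rightarrow> nat" where
  "valence E v = card {e \<in> E. v \<in> e}"

definition isolated_edge :: "nat set set \<Rightarrow> nat set \<Rightarrow> bool" where
  "isolated_edge E e \<longleftrightarrow> e \<in> E \<and> (\<forall>u\<in>e. valence E u = 1)"

definition leaves_not_isolated :: "nat \<Rightarrow> nat set set \<Rightarrow> nat set" where
  "leaves_not_isolated n E =
     {v \<in> {..<n}. valence E v = 1 \<and> \<not> (\<exists>e. isolated_edge E e \<and> v \<in> e)}"

text \<open>Probability that G(n,p) has property P: each edge of the complete graph
on {0..<n} is present independently with probability p.\<close>
definition Gnp_prob :: "nat \<Rightarrow> real \<Rightarrow> (nat set set \<Rightarrow> bool) \<Rightarrow> real" where
  "Gnp_prob n p P =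
     (\<Sum>E\<in>{E. E \<subseteq> all_edges n \<and> P E}.
        p ^ card E * (1 - p) ^ (card (all_edges n) - card E))"

end

theory Submission
  imports Defs "HOL-Real_Asymp.Real_Asymp"
begin


definition mu :: "'a set \<Rightarrow> real \<Rightarrow> 'a set \<Rightarrow> real" where
  "mu A p E = p ^ card E * (1 - p) ^ (card A - card E)"

definition Pr :: "'a set \<Rightarrow> real \<Rightarrow> ('a set \<Rightarrow> bool) \<Rightarrow> real" where
  "Pr A p Q = (\<Sum>E\<in>{E. E \<subseteq> A \<and> Q E}. mu A p E)"

lemma Gnp_Pr: "Gnp_prob n p P = Pr (all_edges n) p P"
  by (simp add: Gnp_prob_def Pr_def mu_def)

lemma mu_nonneg: "0 \<le> p \<Longrightarrow> p \<le> 1 \<Longrightarrow> 0 \<le> mu A p E"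
  by (simp add: mu_def)

lemma total_mass:
  assumes "finite B"
  shows "(\<Sum>F\<in>Pow B. p ^ card F * (1 - p) ^ (card B - card F)) = (1::real)"
proof -
  have "(\<Prod>x\<in>B. p + (1 - p)) = (\<Sum>X\<in>Pow B. (\<Prod>x\<in>X. p) * (\<Prod>x\<in>B-X. 1 - p))"
    by (rule prod_add[OF assms])
  also have "\<dots> = (\<Sum>F\<in>Pow B. p ^ card F * (1 - p) ^ (card B - card F))"
  proof (rule sum.cong[OF refl])
    fix X assume "X \<in> Pow B"
    then have "X \<subseteq> B" by auto
    then have "card (B - X) = card B - card X" using assms by (simp add: card_Diff_subset finite_subset)
    then show "(\<Prod>x\<in>X. p) * (\<Prod>x\<in>B-X. 1 - p) = p ^ card X * (1 - p) ^ (card B - card X)"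
      by simp
  qed
  finally show ?thesis by simp
qed

lemma Pr_eq_single:
  assumes A: "finite A" and SA: "S \<subseteq> A" and TS: "T \<subseteq> S"
  shows "Pr A p (\<lambda>E. E \<inter> S = T) = p ^ card T * (1 - p) ^ (card S - card T)"
proof -
  have fS: "finite S" using A SA finite_subset by blast
  have fT: "finite T" using fS TS finite_subset by blast
  have fAS: "finite (A - S)" using A by simp
  have set: "{E. E \<subseteq> A \<and> E \<inter> S = T} = (\<lambda>F. T \<union> F) ` Pow (A - S)"
  proof (intro set_eqI iffI)
    fix E assume "E \<in> {E. E \<subseteq> A \<and> E \<inter> S = T}"
    then have "E \<subseteq> A" "E \<inter> S = T" by auto
    then have "E = T \<union> (E - S)" by blast
    then show "E \<in> (\<lambda>F. T \<union> F) ` Pow (A - S)" using \<open>E \<subseteq> A\<close> by blast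
  next
    fix E assume "E \<in> (\<lambda>F. T \<union> F) ` Pow (A - S)"
    then show "E \<in> {E. E \<subseteq> A \<and> E \<inter> S = T}" using TS SA by blast
  qed
  have inj: "inj_on (\<lambda>F. T \<union> F) (Pow (A - S))"
    using TS by (auto simp: inj_on_def)
  have cS: "card A = card S + card (A - S)"
    using A SA by (metis card_Diff_subset card_mono finite_subset le_add_diff_inverse)
  have "Pr A p (\<lambda>E. E \<inter> S = T) = (\<Sum>F\<in>Pow (A - S). mu A p (T \<union> F))"
    unfolding Pr_def set by (simp add: sum.reindex[OF inj])
  also have "\<dots> = (\<Sum>F\<in>Pow (A - S). (p ^ card T * (1 - p) ^ (card S - card T)) *
      (p ^ card F * (1 - p) ^ (card (A - S) - card F)))"
  proof (rule sum.cong[OF refl])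
    fix F assume F: "F \<in> Pow (A - S)"
    have fF: "finite F" using F fAS finite_subset by auto
    have dj: "T \<inter> F = {}" using F TS by auto
    have c1: "card (T \<union> F) = card T + card F" using card_Un_disjoint[OF fT fF dj] .
    have cTS: "card T \<le> card S" using card_mono[OF fS TS] .
    have cF: "card F \<le> card (A - S)" using F fAS by (simp add: card_mono)
    have c2: "card A - card (T \<union> F) = (card S - card T) + (card (A - S) - card F)"
      using c1 cS cTS cF by simp
    show "mu A p (T \<union> F) = (p ^ card T * (1 - p) ^ (card S - card T)) *
      (p ^ card F * (1 - p) ^ (card (A - S) - card F))"
    proof -
      have "mu A p (T \<union> F) = p ^ (card T + card F) * (1 - p) ^ ((card S - card T) + (card (A - S) - card F))"
        unfolding mu_def by (subst c2, subst c1, rule refl)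
      then show ?thesis by (simp only: power_add mult_ac)
    qed
  qed
  also have "\<dots> = p ^ card T * (1 - p) ^ (card S - card T)"
    by (simp add: sum_distrib_left[symmetric] total_mass[OF fAS])
  finally show ?thesis .
qed

lemma Pr_eq_family:
  assumes A: "finite A" and SA: "S \<subseteq> A" and TS: "\<TT> \<subseteq> Pow S"
  shows "Pr A p (\<lambda>E. E \<inter> S \<in> \<TT>) = (\<Sum>T\<in>\<TT>. p ^ card T * (1 - p) ^ (card S - card T))"
proof -
  have fS: "finite S" using A SA finite_subset by blast
  have fT: "finite \<TT>" using TS fS by (meson finite_Pow_iff finite_subset)
  have set: "{E. E \<subseteq> A \<and> E \<inter> S \<in> \<TT>} = (\<Union>T\<in>\<TT>. {E. E \<subseteq> A \<and> E \<inter> S = T})" by auto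
  have "Pr A p (\<lambda>E. E \<inter> S \<in> \<TT>) = (\<Sum>T\<in>\<TT>. Pr A p (\<lambda>E. E \<inter> S = T))"
    unfolding Pr_def set
    by (rule sum.UNION_disjoint) (use fT A in \<open>auto intro: finite_subset\<close>)
  also have "\<dots> = (\<Sum>T\<in>\<TT>. p ^ card T * (1 - p) ^ (card S - card T))"
    by (rule sum.cong[OF refl], rule Pr_eq_single) (use A SA TS in auto)
  finally show ?thesis .
qed

lemma Pr_sum: "finite A \<Longrightarrow> Pr A p Q = (\<Sum>E\<in>Pow A. mu A p E * (if Q E then 1 else 0))"
  unfolding Pr_def
  by (simp add: sum.inter_filter[symmetric] Pow_def if_distrib cong: if_cong)



context
  fixes A :: "'a set" and p :: real
  assumes fA: "finite A" and p0: "0 \<le> p" and p1: "p \<le> 1"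
begin

lemma Pr_total: "Pr A p (\<lambda>E. True) = 1"
  using total_mass[OF fA, of p] unfolding Pr_def mu_def by (simp add: Pow_def)

lemma Pr_mono: "(\<And>E. E \<subseteq> A \<Longrightarrow> P E \<Longrightarrow> Q E) \<Longrightarrow> Pr A p P \<le> Pr A p Q"
  unfolding Pr_def
  by (rule sum_mono2) (use fA mu_nonneg[OF p0 p1] in \<open>auto intro: finite_subset\<close>)

lemma Pr_nonneg: "0 \<le> Pr A p P"
  unfolding Pr_def by (rule sum_nonneg) (use mu_nonneg[OF p0 p1] in auto)

lemma Pr_le1: "Pr A p P \<le> 1"
  using Pr_mono[of P "\<lambda>_. True"] Pr_total by simp

lemma Pr_compl: "Pr A p (\<lambda>E. \<not> P E) = 1 - Pr A p P"
proof -
  have "Pr A p (\<lambda>E. \<not> P E) + Pr A p P = (\<Sum>E\<in>Pow A. mu A p E * ((if \<not> P E then 1 else 0) + (if P E then 1 else 0)))"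
    unfolding Pr_sum[OF fA] by (simp add: sum.distrib[symmetric] algebra_simps)
  also have "\<dots> = Pr A p (\<lambda>E. True)" unfolding Pr_sum[OF fA] by (rule sum.cong) auto
  finally show ?thesis using Pr_total by simp
qed

lemma Pr_union_bound:
  assumes fI: "finite I"
  shows "Pr A p (\<lambda>E. \<exists>i\<in>I. Q i E) \<le> (\<Sum>i\<in>I. Pr A p (Q i))"
proof -
  have "Pr A p (\<lambda>E. \<exists>i\<in>I. Q i E) = (\<Sum>E\<in>Pow A. mu A p E * (if \<exists>i\<in>I. Q i E then 1 else 0))"
    by (rule Pr_sum[OF fA])
  also have "\<dots> \<le> (\<Sum>E\<in>Pow A. mu A p E * (\<Sum>i\<in>I. if Q i E then 1 else 0))"
  proof (rule sum_mono, rule mult_left_mono)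
    fix E
    show "(if \<exists>i\<in>I. Q i E then 1 else 0) \<le> (\<Sum>i\<in>I. if Q i E then 1 else (0::real))"
    proof (cases "\<exists>i\<in>I. Q i E")
      case True
      then obtain i where "i \<in> I" "Q i E" by blast
      then have "(if Q i E then 1 else 0) \<le> (\<Sum>i\<in>I. if Q i E then 1 else (0::real))"
        by (intro member_le_sum fI) auto
      then show ?thesis using True \<open>Q i E\<close> by simp
    qed (simp add: sum_nonneg)
    show "0 \<le> mu A p E" by (rule mu_nonneg[OF p0 p1])
  qed
  also have "\<dots> = (\<Sum>i\<in>I. Pr A p (Q i))"
    unfolding Pr_sum[OF fA] by (simp add: sum_distrib_left sum.swap[of _ I])
  finally show ?thesis .
qed

lemma Pr_or: "Pr A p (\<lambda>E. P E \<or> Q E) \<le> Pr A p P + Pr A p Q"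
  using Pr_union_bound[of "{True, False}" "\<lambda>b. if b then P else Q"]
  by (simp add: bex_simps) (smt (verit, ccfv_SIG) Pr_mono)

lemma chebyshev:
  fixes X :: "'a set \<Rightarrow> real"
  assumes Cm: "c < m" and m: "m = (\<Sum>E\<in>Pow A. mu A p E * X E)"
  shows "(m - c)^2 * Pr A p (\<lambda>E. X E < c) \<le> (\<Sum>E\<in>Pow A. mu A p E * (X E)^2) - m^2"
proof -
  have tot: "(\<Sum>E\<in>Pow A. mu A p E) = 1" using Pr_total unfolding Pr_sum[OF fA] by simp
  have "(\<Sum>E\<in>Pow A. mu A p E * (X E - m)^2) =
        (\<Sum>E\<in>Pow A. mu A p E * (X E)^2) - 2 * m * (\<Sum>E\<in>Pow A. mu A p E * X E) + m^2 * (\<Sum>E\<in>Pow A. mu A p E)"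
    by (simp add: power2_diff algebra_simps sum.distrib sum_subtractf sum_distrib_left)
  also have "\<dots> = (\<Sum>E\<in>Pow A. mu A p E * (X E)^2) - m^2"
    using tot m[symmetric] by (simp add: power2_eq_square)
  finally have eq: "(\<Sum>E\<in>Pow A. mu A p E * (X E - m)^2) = (\<Sum>E\<in>Pow A. mu A p E * (X E)^2) - m^2" .
  have "(m - c)^2 * Pr A p (\<lambda>E. X E < c) = (\<Sum>E\<in>Pow A. mu A p E * ((m - c)^2 * (if X E < c then 1 else 0)))"
    unfolding Pr_sum[OF fA] by (simp add: sum_distrib_left algebra_simps)
  also have "\<dots> \<le> (\<Sum>E\<in>Pow A. mu A p E * (X E - m)^2)"
  proof (rule sum_mono, rule mult_left_mono)
    fix E
    show "(m - c)^2 * (if X E < c then 1 else 0) \<le> (X E - m)^2"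
    proof (cases "X E < c")
      case True
      then have "m - c \<le> m - X E" "0 \<le> m - c" using Cm by auto
      then have "(m - c)^2 \<le> (m - X E)^2" by (rule power_mono)
      then show ?thesis using True by (simp add: power2_commute)
    qed simp
    show "0 \<le> mu A p E" by (rule mu_nonneg[OF p0 p1])
  qed
  finally show ?thesis using eq by simp
qed

end


definition star :: "nat \<Rightarrow> nat \<Rightarrow> nat set set" where
  "star n v = {e \<in> all_edges n. v \<in> e}"

lemma finite_all_edges: "finite (all_edges n)"
  unfolding all_edges_def by (rule finite_subset[of _ "Pow {..<n}"]) auto

lemma card_all_edges: "card (all_edges n) \<le> n^2"
proof -
  have "card (all_edges n) = n choose 2"
    unfolding all_edges_def using n_subsets[of "{..<n}" 2] by simp
  also have "\<dots> \<le> n^2"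
  proof (cases "2 \<le> n")
    case True then show ?thesis by (rule binomial_le_pow)
  next
    case False then show ?thesis by (simp add: binomial_eq_0)
  qed
  finally show ?thesis .
qed

lemma all_edges_iff: "e \<in> all_edges n \<longleftrightarrow> (\<exists>u v. u < n \<and> v < n \<and> u \<noteq> v \<and> e = {u, v})"
  unfolding all_edges_def by (auto simp: card_2_iff)

lemma star_eq: "v < n \<Longrightarrow> star n v = (\<lambda>w. {v, w}) ` ({..<n} - {v})"
  unfolding star_def all_edges_def by (auto simp: card_2_iff)

lemma card_star: assumes "v < n" shows "card (star n v) = n - 1"
proof -
  have "inj_on (\<lambda>w. {v, w}) ({..<n} - {v})" by (auto simp: inj_on_def doubleton_eq_iff)
  then show ?thesis using assms by (simp add: star_eq card_image)
qed

lemma star_sub: "star n v \<subseteq> all_edges n" unfolding star_def by auto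

lemma star_inter: "u < n \<Longrightarrow> v < n \<Longrightarrow> u \<noteq> v \<Longrightarrow> star n u \<inter> star n v = {{u, v}}"
  unfolding star_def all_edges_def by (auto simp: card_2_iff)

lemma card_star_union:
  assumes "u < n" "v < n" "u \<noteq> v"
  shows "card (star n u \<union> star n v) = 2 * n - 3"
proof -
  have f: "finite (star n u)" "finite (star n v)" by (rule finite_subset[OF star_sub finite_all_edges])+
  have "card (star n u \<union> star n v) + card (star n u \<inter> star n v) = card (star n u) + card (star n v)"
    using card_Un_Int[OF f] by linarith
  moreover have "card (star n u \<inter> star n v) = 1" using star_inter[OF assms] by simp
  moreover have "card (star n u) = n - 1" "card (star n v) = n - 1" using card_star assms by auto
  ultimately show ?thesis using assms by linarith
qed

lemma valence_eq: "E \<subseteq> all_edges n \<Longrightarrow> valence E v = card (E \<inter> star n v)"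
  unfolding valence_def star_def by (rule arg_cong[where f=card]) auto

lemma card1_iff: "card X = 1 \<longleftrightarrow> (\<exists>x. X = {x})" by (simp add: card_1_singleton_iff)

lemma deg1_iff:
  assumes "E \<subseteq> all_edges n"
  shows "valence E v = 1 \<longleftrightarrow> E \<inter> star n v \<in> (\<lambda>e. {e}) ` star n v"
proof
  assume "valence E v = 1"
  then have "card (E \<inter> star n v) = 1" using valence_eq[OF assms, of v] by simp
  then obtain x where x: "E \<inter> star n v = {x}" by (metis card1_iff)
  then have "x \<in> star n v" by (metis Int_iff insertI1)
  then show "E \<inter> star n v \<in> (\<lambda>e. {e}) ` star n v" using x by (rule rev_image_eqI)
next
  assume "E \<inter> star n v \<in> (\<lambda>e. {e}) ` star n v"
  then obtain e where "E \<inter> star n v = {e}" by (rule imageE)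
  then show "valence E v = 1" using valence_eq[OF assms, of v] by simp
qed

lemma Pr_deg1:
  assumes "v < n"
  shows "Pr (all_edges n) p (\<lambda>E. valence E v = 1) = real (n - 1) * p * (1 - p)^(n - 2)"
proof -
  let ?S = "star n v"
  have e1: "{E. E \<subseteq> all_edges n \<and> valence E v = 1} = {E. E \<subseteq> all_edges n \<and> E \<inter> ?S \<in> (\<lambda>e. {e}) ` ?S}"
  proof (rule Collect_cong)
    fix E show "(E \<subseteq> all_edges n \<and> valence E v = 1) = (E \<subseteq> all_edges n \<and> E \<inter> ?S \<in> (\<lambda>e. {e}) ` ?S)"
      using deg1_iff[of E n v] by blast
  qed
  have "Pr (all_edges n) p (\<lambda>E. valence E v = 1) = Pr (all_edges n) p (\<lambda>E. E \<inter> ?S \<in> (\<lambda>e. {e}) ` ?S)"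
    unfolding Pr_def e1 ..
  also have "\<dots> = (\<Sum>T\<in>(\<lambda>e. {e}) ` ?S. p ^ card T * (1 - p) ^ (card ?S - card T))"
    by (rule Pr_eq_family[OF finite_all_edges star_sub]) (rule image_subsetI, simp)
  also have "\<dots> = (\<Sum>e\<in>?S. p ^ card {e} * (1 - p) ^ (card ?S - card {e}))"
    by (rule sum.reindex_cong[where l="\<lambda>e. {e}"]) (auto simp: inj_on_def)
  also have "\<dots> = (\<Sum>e\<in>?S. p * (1 - p) ^ (n - 2))"
    using card_star[OF assms] by (simp add: diff_diff_add numeral_2_eq_2)
  also have "\<dots> = real (n - 1) * p * (1 - p)^(n - 2)" using card_star[OF assms] by simp
  finally show ?thesis .
qed



lemma sum_insert_le:
  assumes "finite B" "0 \<le> w a"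
  shows "sum w (insert a B) \<le> w a + sum (w :: _ \<Rightarrow> real) B"
  using assms by (cases "a \<in> B") (auto simp: insert_absorb)

lemma deg1_single:
  assumes "E \<subseteq> all_edges n" "valence E v = 1"
  obtains e where "E \<inter> star n v = {e}"
proof -
  have "card (E \<inter> star n v) = 1" using valence_eq[OF assms(1), of v] assms(2) by simp
  then show ?thesis using that by (metis card1_iff)
qed

lemma pair_event:
  assumes u: "u < n" and v: "v < n" and uv: "u \<noteq> v" and E: "E \<subseteq> all_edges n"
    and du: "valence E u = 1" and dv: "valence E v = 1"
  shows "E \<inter> (star n u \<union> star n v) \<in>
     insert {{u,v}} ((\<lambda>(e,f). {e,f}) ` ((star n u - {{u,v}}) \<times> (star n v - {{u,v}})))"
proof -
  obtain e where e: "E \<inter> star n u = {e}" using deg1_single[OF E du] .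
  obtain f where f: "E \<inter> star n v = {f}" using deg1_single[OF E dv] .
  have int: "star n u \<inter> star n v = {{u,v}}" by (rule star_inter[OF u v uv])
  have S: "E \<inter> (star n u \<union> star n v) = {e, f}" using e f by blast
  show ?thesis
  proof (cases "e = {u,v} \<or> f = {u,v}")
    case True
    then have "e = f"
    proof
      assume "e = {u, v}"
      then have "e \<in> E \<inter> star n v" using e int by blast
      then show "e = f" using f by blast
    next
      assume "f = {u, v}"
      then have "f \<in> E \<inter> star n u" using f int by blast
      then show "e = f" using e by blast
    qed
    then show ?thesis using S True by auto
  next
    case False
    then have "(e, f) \<in> (star n u - {{u,v}}) \<times> (star n v - {{u,v}})" using e f by blast
    then show ?thesis unfolding S by (intro insertI2) (rule rev_image_eqI, auto)
  qed
qed

lemma Pr_deg11: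
  assumes u: "u < n" and v: "v < n" and uv: "u \<noteq> v" and p0: "0 \<le> p" and p1: "p \<le> 1"
  shows "Pr (all_edges n) p (\<lambda>E. valence E u = 1 \<and> valence E v = 1)
     \<le> p * (1 - p)^(2*n-4) + real ((n-2)*(n-2)) * (p^2 * (1 - p)^(2*n-5))"
proof -
  let ?A = "all_edges n"
  let ?su = "star n u" and ?sv = "star n v"
  let ?S = "?su \<union> ?sv"
  let ?I = "(?su - {{u,v}}) \<times> (?sv - {{u,v}})"
  let ?g = "\<lambda>(e,f). {e,f} :: nat set set"
  let ?T = "insert {{u,v}} (?g ` ?I)"
  let ?w = "\<lambda>T::nat set set. p ^ card T * (1 - p) ^ (card ?S - card T)"
  have fA: "finite ?A" by (rule finite_all_edges)
  have fsu: "finite ?su" "finite ?sv" by (rule finite_subset[OF star_sub finite_all_edges])+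
  have fI: "finite ?I" using fsu by simp
  have int: "?su \<inter> ?sv = {{u,v}}" by (rule star_inter[OF u v uv])
  have cS: "card ?S = 2 * n - 3" by (rule card_star_union[OF u v uv])
  have SA: "?S \<subseteq> ?A" using star_sub by blast
  have TS: "?T \<subseteq> Pow ?S" using int by auto
  have "Pr ?A p (\<lambda>E. valence E u = 1 \<and> valence E v = 1) \<le> Pr ?A p (\<lambda>E. E \<inter> ?S \<in> ?T)"
    by (rule Pr_mono[OF fA p0 p1]) (rule pair_event[OF u v uv], auto)
  also have "\<dots> = sum ?w ?T" by (rule Pr_eq_family[OF fA SA TS])
  also have "\<dots> \<le> ?w {{u,v}} + sum ?w (?g ` ?I)"
    by (rule sum_insert_le) (use fI p0 p1 in auto)
  also have "sum ?w (?g ` ?I) \<le> sum (?w \<circ> ?g) ?I"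
    by (rule sum_image_le[OF fI]) (use p0 p1 in auto)
  also have "sum (?w \<circ> ?g) ?I = sum (\<lambda>_. p^2 * (1 - p)^(2*n-5)) ?I"
  proof (rule sum.cong[OF refl])
    fix x assume x: "x \<in> ?I"
    obtain e f where ef: "x = (e, f)" by (cases x)
    have "e \<noteq> f" using x ef int by auto
    then have "card {e, f} = 2" by simp
    then show "(?w \<circ> ?g) x = p^2 * (1 - p)^(2*n-5)" using ef cS by (simp add: numeral_2_eq_2)
  qed
  also have "\<dots> = real ((n-2)*(n-2)) * (p^2 * (1 - p)^(2*n-5))"
  proof -
    have "{u,v} \<in> ?su" "{u,v} \<in> ?sv" using int by auto
    then have "card ?I = (n - 2) * (n - 2)"
      using card_star[OF u] card_star[OF v] fsu by (simp add: card_cartesian_product numeral_2_eq_2)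
    then show ?thesis by simp
  qed
  also have "?w {{u,v}} = p * (1 - p)^(2*n-4)" using cS by simp
  finally show ?thesis by simp
qed

lemma Pr_iso:
  assumes e: "e \<in> all_edges n" and p0: "0 \<le> p" and p1: "p \<le> 1"
  shows "Pr (all_edges n) p (\<lambda>E. isolated_edge E e) \<le> p * (1 - p)^(2*n-4)"
proof -
  obtain u v where uv: "u < n" "v < n" "u \<noteq> v" "e = {u,v}" using e all_edges_iff by blast
  let ?S = "star n u \<union> star n v"
  have fA: "finite (all_edges n)" by (rule finite_all_edges)
  have cS: "card ?S = 2 * n - 3" by (rule card_star_union[OF uv(1-3)])
  have SA: "?S \<subseteq> all_edges n" using star_sub by blast
  have eS: "{e} \<subseteq> ?S" using e uv unfolding star_def by auto
  have "Pr (all_edges n) p (\<lambda>E. isolated_edge E e) \<le> Pr (all_edges n) p (\<lambda>E. E \<inter> ?S = {e})"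
  proof (rule Pr_mono[OF fA p0 p1])
    fix E assume E: "E \<subseteq> all_edges n" and iso: "isolated_edge E e"
    have eE: "e \<in> E" and vu: "valence E u = 1" and vv: "valence E v = 1"
      using iso uv(4) unfolding isolated_edge_def by auto
    obtain a where a: "E \<inter> star n u = {a}" using deg1_single[OF E vu] .
    obtain b where b: "E \<inter> star n v = {b}" using deg1_single[OF E vv] .
    have "e \<in> star n u" "e \<in> star n v" using eS by (auto simp: star_def e uv(4))
    then have "a = e" "b = e" using a b eE by blast+
    then show "E \<inter> ?S = {e}" using a b by blast
  qed
  also have "\<dots> = p * (1 - p)^(2*n-4)"
    using Pr_eq_single[OF fA SA eS, of p] cS by simp
  finally show ?thesis .
qed



definition Xdeg :: "nat \<Rightarrow> nat set set \<Rightarrow> real" where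
  "Xdeg n E = real (card {v \<in> {..<n}. valence E v = 1})"

lemma Xdeg_sum: "Xdeg n E = (\<Sum>v<n. if valence E v = 1 then 1 else 0)"
  unfolding Xdeg_def by (simp add: sum.If_cases Int_def)

lemma leaves_ok:
  assumes E: "E \<subseteq> all_edges n" and noiso: "\<not> (\<exists>e\<in>all_edges n. isolated_edge E e)"
  shows "leaves_not_isolated n E = {v \<in> {..<n}. valence E v = 1}"
proof -
  have "\<not> (\<exists>e. isolated_edge E e \<and> v \<in> e)" for v
    using noiso E unfolding isolated_edge_def by blast
  then show ?thesis unfolding leaves_not_isolated_def by blast
qed

lemma per_n_bound:
  fixes n :: nat and p C :: real
  assumes n3: "n \<ge> 3" and p0: "0 \<le> p" and p1: "p \<le> 1"
  defines "m \<equiv> real n * real (n - 1) * p * (1 - p)^(n - 2)"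
  defines "sb \<equiv> m + real n * real (n - 1) * (p * (1 - p)^(2*n-4) + real ((n-2)*(n-2)) * (p^2 * (1 - p)^(2*n-5)))"
  assumes Cm: "C < m"
  shows "1 - (sb - m^2) / (m - C)^2 - real n ^ 2 * (p * (1 - p)^(2*n-4))
          \<le> Gnp_prob n p (\<lambda>E. real (card (leaves_not_isolated n E)) \<ge> C)"
proof -
  let ?A = "all_edges n"
  have fA: "finite ?A" by (rule finite_all_edges)
  note Pr_props = Pr_mono[OF fA p0 p1] Pr_or[OF fA p0 p1] Pr_compl[OF fA p0 p1]
  have EX: "(\<Sum>E\<in>Pow ?A. mu ?A p E * Xdeg n E) = m"
  proof -
    have "(\<Sum>E\<in>Pow ?A. mu ?A p E * Xdeg n E) = (\<Sum>v<n. Pr ?A p (\<lambda>E. valence E v = 1))"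
      unfolding Xdeg_sum Pr_sum[OF fA] by (simp add: sum_distrib_left sum.swap[of _ "Pow ?A"])
    also have "\<dots> = (\<Sum>v<n. real (n - 1) * p * (1 - p)^(n - 2))"
      by (rule sum.cong[OF refl], rule Pr_deg1) simp
    finally show ?thesis unfolding m_def using n3 by (simp add: of_nat_diff)
  qed
  have EX2: "(\<Sum>E\<in>Pow ?A. mu ?A p E * (Xdeg n E)^2) \<le> sb"
  proof -
    let ?t = "p * (1 - p)^(2*n-4) + real ((n-2)*(n-2)) * (p^2 * (1 - p)^(2*n-5))"
    have "(\<Sum>E\<in>Pow ?A. mu ?A p E * (Xdeg n E)^2) =
          (\<Sum>u<n. \<Sum>v<n. Pr ?A p (\<lambda>E. valence E u = 1 \<and> valence E v = 1))"
    proof -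
      have pt: "mu ?A p E * (Xdeg n E)^2 = (\<Sum>u<n. \<Sum>v<n. mu ?A p E * (if valence E u = 1 \<and> valence E v = 1 then 1 else 0))" for E
        unfolding Xdeg_sum power2_eq_square sum_product sum_distrib_left by (intro sum.cong refl) (auto simp: sum_distrib_left)
      have "(\<Sum>E\<in>Pow ?A. mu ?A p E * (Xdeg n E)^2) = (\<Sum>E\<in>Pow ?A. \<Sum>u<n. \<Sum>v<n. mu ?A p E * (if valence E u = 1 \<and> valence E v = 1 then 1 else 0))"
        by (simp only: pt)
      also have "\<dots> = (\<Sum>u<n. \<Sum>E\<in>Pow ?A. \<Sum>v<n. mu ?A p E * (if valence E u = 1 \<and> valence E v = 1 then 1 else 0))"
        by (rule sum.swap)
      also have "\<dots> = (\<Sum>u<n. \<Sum>v<n. \<Sum>E\<in>Pow ?A. mu ?A p E * (if valence E u = 1 \<and> valence E v = 1 then 1 else 0))"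
        by (rule sum.cong[OF refl], rule sum.swap)
      finally show ?thesis by (simp only: Pr_sum[OF fA])
    qed
    also have "\<dots> \<le> (\<Sum>u<n. real (n - 1) * p * (1 - p)^(n - 2) + real (n - 1) * ?t)"
    proof (rule sum_mono)
      fix u assume u: "u \<in> {..<n}"
      have "(\<Sum>v<n. Pr ?A p (\<lambda>E. valence E u = 1 \<and> valence E v = 1)) =
            Pr ?A p (\<lambda>E. valence E u = 1 \<and> valence E u = 1) +
            (\<Sum>v\<in>{..<n} - {u}. Pr ?A p (\<lambda>E. valence E u = 1 \<and> valence E v = 1))"
        using u by (simp add: sum.remove)
      also have "\<dots> \<le> real (n - 1) * p * (1 - p)^(n - 2) + (\<Sum>v\<in>{..<n} - {u}. ?t)"
      proof (rule add_mono)
        show "Pr ?A p (\<lambda>E. valence E u = 1 \<and> valence E u = 1) \<le> real (n - 1) * p * (1 - p)^(n - 2)"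
          using Pr_deg1[of u n p] u by simp
        show "(\<Sum>v\<in>{..<n} - {u}. Pr ?A p (\<lambda>E. valence E u = 1 \<and> valence E v = 1)) \<le> (\<Sum>v\<in>{..<n} - {u}. ?t)"
          by (rule sum_mono) (rule Pr_deg11[OF _ _ _ p0 p1], use u in auto)
      qed
      also have "(\<Sum>v\<in>{..<n} - {u}. ?t) = real (n - 1) * ?t"
      proof -
        have c: "card ({..<n} - {u}) = n - 1" using u by simp
        have "(\<Sum>v\<in>{..<n} - {u}. ?t) = real (card ({..<n} - {u})) * ?t" by (rule sum_constant)
        then show ?thesis by (simp only: c)
      qed
      finally show "(\<Sum>v<n. Pr ?A p (\<lambda>E. valence E u = 1 \<and> valence E v = 1))
          \<le> real (n - 1) * p * (1 - p)^(n - 2) + real (n - 1) * ?t" .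
    qed
    also have "\<dots> = sb" unfolding sb_def m_def by (simp only: sum_constant card_lessThan) (simp only: algebra_simps)
    finally show ?thesis .
  qed
  have cheb: "(m - C)^2 * Pr ?A p (\<lambda>E. Xdeg n E < C) \<le> sb - m^2"
    using chebyshev[OF fA p0 p1 Cm EX[symmetric]] EX2 by linarith
  have pos: "0 < (m - C)^2" using Cm by simp
  have b1: "Pr ?A p (\<lambda>E. Xdeg n E < C) \<le> (sb - m^2) / (m - C)^2"
    using cheb pos by (simp add: field_simps mult.commute)
  have b2: "Pr ?A p (\<lambda>E. \<exists>e\<in>?A. isolated_edge E e) \<le> real n ^ 2 * (p * (1 - p)^(2*n-4))"
  proof -
    have "Pr ?A p (\<lambda>E. \<exists>e\<in>?A. isolated_edge E e) \<le> (\<Sum>e\<in>?A. Pr ?A p (\<lambda>E. isolated_edge E e))"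
      by (rule Pr_union_bound[OF fA p0 p1 fA])
    also have "\<dots> \<le> (\<Sum>e\<in>?A. p * (1 - p)^(2*n-4))"
      by (rule sum_mono) (rule Pr_iso[OF _ p0 p1])
    also have "\<dots> = real (card ?A) * (p * (1 - p)^(2*n-4))" by simp
    also have "\<dots> \<le> real n ^ 2 * (p * (1 - p)^(2*n-4))"
      by (rule mult_right_mono) (use card_all_edges[of n] p0 p1 in \<open>auto simp flip: of_nat_power\<close>)
    finally show ?thesis .
  qed
  have "Pr ?A p (\<lambda>E. \<not> (Xdeg n E < C \<or> (\<exists>e\<in>?A. isolated_edge E e)))
        \<le> Pr ?A p (\<lambda>E. real (card (leaves_not_isolated n E)) \<ge> C)"
  proof (rule Pr_mono[OF fA p0 p1])
    fix E assume E: "E \<subseteq> ?A" and h: "\<not> (Xdeg n E < C \<or> (\<exists>e\<in>?A. isolated_edge E e))"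
    then show "real (card (leaves_not_isolated n E)) \<ge> C"
      using leaves_ok[OF E] unfolding Xdeg_def by auto
  qed
  moreover have "Pr ?A p (\<lambda>E. \<not> (Xdeg n E < C \<or> (\<exists>e\<in>?A. isolated_edge E e)))
      = 1 - Pr ?A p (\<lambda>E. Xdeg n E < C \<or> (\<exists>e\<in>?A. isolated_edge E e))"
    by (rule Pr_compl[OF fA p0 p1])
  moreover have "Pr ?A p (\<lambda>E. Xdeg n E < C \<or> (\<exists>e\<in>?A. isolated_edge E e))
      \<le> Pr ?A p (\<lambda>E. Xdeg n E < C) + Pr ?A p (\<lambda>E. \<exists>e\<in>?A. isolated_edge E e)"
    by (rule Pr_or[OF fA p0 p1])
  ultimately show ?thesis using b1 b2 unfolding Gnp_Pr by linarith
qed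



lemma xexp_mono:
  fixes x y :: real
  assumes "1 \<le> x" "x \<le> y"
  shows "y * exp (- y) \<le> x * exp (- x)"
proof -
  have "1 + (y - x) \<le> exp (y - x)" by (rule exp_ge_add_one_self)
  moreover have "(y - x) / x \<le> y - x" using divide_left_mono[of 1 x "y-x"] assms by simp
  moreover have "y / x = 1 + (y - x) / x" using assms by (simp add: field_simps)
  ultimately have "y / x \<le> exp (y - x)" by linarith
  then have "y \<le> x * exp (y - x)" using assms by (simp add: divide_le_eq mult.commute)
  then have "y * exp (- y) \<le> x * exp (y - x) * exp (- y)" by (rule mult_right_mono) simp
  also have "\<dots> = x * exp (- x)" by (simp add: mult.assoc exp_add[symmetric])
  finally show ?thesis .
qed

lemma ln16: "2 \<le> ln (16::real)"
proof -
  have "exp (2::real) = exp 1 ^ 2" using exp_of_nat_mult[of 2 1] by simp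
  also have "\<dots> \<le> 3 ^ 2" by (rule power_mono[OF exp_le]) simp
  finally have "exp (2::real) \<le> 16" by simp
  then show ?thesis by (subst ln_ge_iff) auto
qed

lemma ln_big: "16 \<le> n \<Longrightarrow> 2 \<le> ln (real n)"
proof -
  assume "16 \<le> n"
  then have "ln 16 \<le> ln (real n)" by (subst ln_le_cancel_iff) auto
  then show ?thesis using ln16 by linarith
qed

lemma exp_neg_L:
  assumes "16 \<le> n"
  shows "exp (- (ln (real n) + ln (ln (real n)))) = 1 / (real n * ln (real n))"
proof -
  have "0 < ln (real n)" using ln_big[OF assms] by simp
  moreover have "0 < real n" using assms by simp
  ultimately have e1: "exp (ln (real n)) = real n" "exp (ln (ln (real n))) = ln (real n)" by simp_all
  have "exp (- (ln (real n) + ln (ln (real n)))) = inverse (exp (ln (real n)) * exp (ln (ln (real n))))"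
    by (simp only: exp_minus exp_add)
  also have "\<dots> = 1 / (real n * ln (real n))" by (simp only: e1 inverse_eq_divide)
  finally show ?thesis .
qed

lemma pow_lower:
  fixes p :: real
  assumes "0 \<le> p" "p \<le> 1/2"
  shows "exp (- (real n * p) - 2 * (real n * p^2)) \<le> (1 - p) ^ n"
proof -
  have "- p - 2 * p^2 \<le> ln (1 - p)" by (rule ln_one_minus_pos_lower_bound) (use assms in auto)
  then have "real n * (- p - 2 * p^2) \<le> real n * ln (1 - p)" by (rule mult_left_mono) simp
  then have "exp (real n * (- p - 2 * p^2)) \<le> exp (real n * ln (1 - p))" by simp
  also have "\<dots> = exp (ln (1 - p)) ^ n" by (rule exp_of_nat_mult)
  also have "\<dots> = (1 - p) ^ n" using assms by simp
  finally show ?thesis by (simp add: algebra_simps)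
qed

lemma pow_upper:
  fixes p :: real
  assumes "0 \<le> p" "p \<le> 1"
  shows "(1 - p) ^ k \<le> exp (- (real k * p))"
proof -
  have "(1 - p) ^ k \<le> exp (- p) ^ k"
    by (rule power_mono) (use exp_ge_add_one_self[of "-p"] assms in auto)
  also have "\<dots> = exp (real k * (- p))" by (rule exp_of_nat_mult[symmetric])
  finally show ?thesis by simp
qed

lemma point_m:
  fixes n :: nat and p w2 :: real
  defines "l \<equiv> ln (real n)"
  assumes n: "16 \<le> n" and w2: "0 \<le> w2"
    and up: "p < (l + ln l - w2) / real n" and lo: "l / 2 < real n * p"
    and p2: "p \<le> 1/2" and np2: "2 * (real n * p^2) \<le> 1"
  shows "exp w2 / (4 * exp 1) \<le> real n * real (n - 1) * p * (1 - p) ^ (n - 2)"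
proof -
  have l2: "2 \<le> l" unfolding l_def by (rule ln_big[OF n])
  have nn: "0 < real n" using n by simp
  have "0 < real n * p" using lo l2 by linarith
  then have p0: "0 \<le> p" using nn by (simp add: zero_less_mult_iff)
  define x where "x = real n * p"
  define y where "y = l + ln l - w2"
  have x1: "1 \<le> x" using lo l2 unfolding x_def by simp
  have xy: "x \<le> y" using up nn unfolding x_def y_def by (simp add: field_simps)
  have q1: "exp (- x) * exp (-1) \<le> (1 - p) ^ (n - 2)"
  proof -
    have "exp (- x) * exp (-1) = exp (- x - 1)" by (simp add: exp_add[symmetric])
    also have "\<dots> \<le> exp (- (real n * p) - 2 * (real n * p^2))" using np2 unfolding x_def by simp
    also have "\<dots> \<le> (1 - p) ^ n" by (rule pow_lower[OF p0 p2])
    also have "\<dots> \<le> (1 - p) ^ (n - 2)" by (rule power_decreasing) (use p0 p2 in auto)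
    finally show ?thesis .
  qed
  have "y * exp (- y) \<le> x * exp (- x)" by (rule xexp_mono[OF x1 xy])
  moreover have "y * exp (- y) = y * exp w2 / (real n * l)"
  proof -
    have "- y = - (l + ln l) + w2" unfolding y_def by simp
    then have "exp (- y) = exp (- (l + ln l)) * exp w2" by (simp only: exp_add)
    also have "\<dots> = 1 / (real n * l) * exp w2" using exp_neg_L[OF n] unfolding l_def by simp
    finally show ?thesis by simp
  qed
  moreover have "l / 2 \<le> y" using lo xy unfolding x_def by simp
  ultimately have "exp w2 / (2 * real n) \<le> x * exp (- x)"
  proof -
    assume h1: "y * exp (- y) \<le> x * exp (- x)" and h2: "y * exp (- y) = y * exp w2 / (real n * l)"
      and h3: "l / 2 \<le> y"
    have "exp w2 / (2 * real n) = (l / 2) * (exp w2 / (real n * l))" using l2 nn by (simp add: field_simps)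
    also have "\<dots> \<le> y * (exp w2 / (real n * l))" by (rule mult_right_mono[OF h3]) (use l2 nn in simp)
    also have "\<dots> = y * exp (- y)" using h2 by simp
    finally show ?thesis using h1 by linarith
  qed
  then have A: "exp w2 / (2 * real n) * exp (-1) \<le> x * exp (- x) * exp (-1)"
    by (rule mult_right_mono) simp
  have B: "x * exp (- x) * exp (-1) \<le> x * (1 - p) ^ (n - 2)"
    using mult_left_mono[OF q1, of x] x1 by (simp add: mult.assoc)
  have C: "1/2 \<le> real (n - 1) / real n" using n by (simp add: field_simps of_nat_diff)
  have "exp w2 / (4 * exp 1) = (1/2) * (exp w2 / (2 * real n) * exp (-1)) * real n"
    using nn by (simp add: exp_minus field_simps)
  also have "\<dots> \<le> (real (n - 1) / real n) * (x * (1 - p) ^ (n - 2)) * real n"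
    by (intro mult_right_mono mult_mono C order.trans[OF A B]) (use x1 p0 p2 in auto)
  also have "\<dots> = real n * real (n - 1) * p * (1 - p) ^ (n - 2)"
    using nn unfolding x_def by (simp add: field_simps)
  finally show ?thesis .
qed

lemma point_iso:
  fixes n :: nat and p w1 :: real
  defines "l \<equiv> ln (real n)"
  assumes n: "16 \<le> n" and w1: "0 \<le> w1"
    and lo: "l + ln l + w1 < 2 * (real n * p)"
    and p0: "0 \<le> p" and p4: "p \<le> 1/4"
  shows "real n ^ 2 * (p * (1 - p) ^ (2*n-4)) \<le> exp 1 * exp (- w1) + exp 1 / 2 * (w1 * exp (- w1))"
proof -
  have l2: "2 \<le> l" unfolding l_def by (rule ln_big[OF n])
  have nn: "0 < real n" using n by simp
  have lnl: "0 \<le> ln l" "ln l \<le> l" using l2 ln_less_self[of l] by (auto, linarith)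
  define y where "y = 2 * (real n * p)"
  define z where "z = l + ln l + w1"
  have z1: "1 \<le> z" using l2 lnl w1 unfolding z_def by linarith
  have zy: "z \<le> y" using lo unfolding y_def z_def by simp
  have r: "real (2*n-4) = 2 * real n - 4" using n by (simp add: of_nat_diff)
  have "(1 - p) ^ (2*n-4) \<le> exp (- (real (2*n-4) * p))" by (rule pow_upper) (use p0 p4 in auto)
  also have "\<dots> = exp (- y) * exp (4 * p)" unfolding r y_def by (simp add: exp_add[symmetric] algebra_simps)
  also have "\<dots> \<le> exp (- y) * exp 1" using p4 by simp
  finally have q: "(1 - p) ^ (2*n-4) \<le> exp (- y) * exp 1" .
  have "real n ^ 2 * (p * (1 - p) ^ (2*n-4)) \<le> real n ^ 2 * (p * (exp (- y) * exp 1))"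
    by (intro mult_left_mono q) (use p0 in auto)
  also have "\<dots> = exp 1 * (real n / 2) * (y * exp (- y))" unfolding y_def by (simp add: power2_eq_square)
  also have "\<dots> \<le> exp 1 * (real n / 2) * (z * exp (- z))"
    by (intro mult_left_mono xexp_mono[OF z1 zy]) (use nn in auto)
  also have "z * exp (- z) = z * exp (- w1) / (real n * l)"
  proof -
    have "- z = - (l + ln l) + (- w1)" unfolding z_def by simp
    then have "exp (- z) = exp (- (l + ln l)) * exp (- w1)" by (simp only: exp_add)
    also have "\<dots> = 1 / (real n * l) * exp (- w1)" using exp_neg_L[OF n] unfolding l_def by simp
    finally show ?thesis by simp
  qed
  also have "exp 1 * (real n / 2) * (z * exp (- w1) / (real n * l)) = exp 1 * (z * exp (- w1)) / (2 * l)"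
    using nn l2 by (simp add: field_simps)
  also have "\<dots> \<le> exp 1 * ((2 * l + w1) * exp (- w1)) / (2 * l)"
    by (intro divide_right_mono mult_left_mono mult_right_mono) (use lnl l2 in \<open>auto simp: z_def\<close>)
  also have "\<dots> = exp 1 * exp (- w1) + exp 1 / 2 * (w1 * exp (- w1) / l)"
    using l2 by (simp add: field_simps)
  also have "\<dots> \<le> exp 1 * exp (- w1) + exp 1 / 2 * (w1 * exp (- w1))"
  proof -
    have "w1 * exp (- w1) / l \<le> w1 * exp (- w1) / 1"
      by (rule divide_left_mono) (use l2 w1 in auto)
    then have "exp 1 / 2 * (w1 * exp (- w1) / l) \<le> exp 1 / 2 * (w1 * exp (- w1))"
      by (intro mult_left_mono) auto
    then show ?thesis by linarith
  qed
  finally show ?thesis .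
qed



lemma var_bound:
  fixes n :: nat and p C :: real
  assumes n3: "n \<ge> 3" and p0: "0 < p" and p1: "p < 1"
  defines "m \<equiv> real n * real (n - 1) * p * (1 - p)^(n - 2)"
  defines "sb \<equiv> m + real n * real (n - 1) * (p * (1 - p)^(2*n-4) + real ((n-2)*(n-2)) * (p^2 * (1 - p)^(2*n-5)))"
  assumes Cm: "C < m"
  shows "(sb - m^2) / (m - C)^2 \<le> (1/m + 1/(real n * real (n - 1) * p) + p / (1 - p)) / (1 - C/m)^2"
proof -
  define q where "q = 1 - p"
  define Q where "Q = q ^ (2*n-5)"
  define N where "N = real n"
  define K where "K = real (n - 1)"
  define D where "D = real ((n-2)*(n-2))"
  have q0: "0 < q" using p1 unfolding q_def by simp
  have Q0: "0 < Q" using q0 unfolding Q_def by simp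
  have N0: "0 < N" "0 < K" using n3 unfolding N_def K_def by auto
  have e1: "q ^ (2*n-4) = Q * q"
  proof -
    have "2*n-4 = Suc (2*n-5)" using n3 by simp
    then show ?thesis unfolding Q_def by simp
  qed
  have e2: "(q ^ (n-2))^2 = Q * q"
  proof -
    have "(q ^ (n-2))^2 = q ^ (2*n-4)" using n3 by (simp add: power_mult[symmetric] algebra_simps diff_mult_distrib)
    then show ?thesis using e1 by simp
  qed
  have DK: "D \<le> N * K"
  proof -
    have "(n-2)*(n-2) \<le> n * (n - 1)" by (intro mult_le_mono) auto
    then show ?thesis unfolding D_def N_def K_def by (metis of_nat_le_iff of_nat_mult)
  qed
  have mdef: "m = N * K * p * q^(n-2)" unfolding m_def N_def K_def q_def ..
  have m0: "0 < m" using mdef N0 p0 q0 by simp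
  have msq: "m^2 = (N*K*p)^2 * (Q * q)"
    unfolding mdef using e2 by (simp add: power_mult_distrib)
  have sbd: "sb = m + N * K * (p * (Q * q) + D * (p^2 * Q))"
    unfolding sb_def N_def K_def D_def using e1 unfolding q_def Q_def by simp
  have "N * K * (D * (p^2 * Q)) - m^2 = N * K * p^2 * Q * (D - N * K * q)"
    unfolding msq by (simp add: algebra_simps power2_eq_square)
  also have "\<dots> \<le> N * K * p^2 * Q * (N * K * p)"
  proof (rule mult_left_mono)
    show "D - N * K * q \<le> N * K * p" using DK unfolding q_def by (simp add: algebra_simps)
    show "0 \<le> N * K * p^2 * Q" using N0 Q0 by simp
  qed
  finally have t: "N * K * (D * (p^2 * Q)) - m^2 \<le> N * K * p^2 * Q * (N * K * p)" .
  have "sb - m^2 \<le> m + N * K * p * (Q * q) + N * K * p^2 * Q * (N * K * p)"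
    using t unfolding sbd by (simp add: algebra_simps)
  also have "\<dots> = m^2 * (1/m + 1/(N * K * p) + p / q)"
  proof -
    have a: "m^2 * (1/m + 1/(N * K * p) + p / q) = m + m^2/(N*K*p) + m^2*p/q"
      using m0 N0 p0 q0 by (simp add: field_simps power2_eq_square)
    have b: "m^2/(N*K*p) = N * K * p * (Q * q)" unfolding msq using N0 p0 by (simp add: field_simps power2_eq_square)
    have c: "m^2*p/q = N * K * p^2 * Q * (N * K * p)" unfolding msq using q0 by (simp add: field_simps power2_eq_square)
    show ?thesis using a b c by simp
  qed
  finally have A: "sb - m^2 \<le> m^2 * (1/m + 1/(N * K * p) + p / q)" .
  have B: "(m - C)^2 = m^2 * (1 - C/m)^2" using m0 by (simp add: field_simps power2_eq_square)
  have pos: "0 < (m - C)^2" using Cm by simp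
  have "(sb - m^2) / (m - C)^2 \<le> m^2 * (1/m + 1/(N * K * p) + p / q) / (m - C)^2"
    by (rule divide_right_mono[OF A]) (use pos in simp)
  also have "\<dots> = (1/m + 1/(N * K * p) + p / q) / (1 - C/m)^2"
    unfolding B using m0 by simp
  finally show ?thesis unfolding N_def K_def q_def .
qed



lemma props:
  fixes n :: nat and p w1 w2 :: real
  defines "l \<equiv> ln (real n)"
  assumes n: "16 \<le> n" and w1: "0 \<le> w1" and w2: "0 \<le> w2"
    and H: "(ln n + ln (ln n) + w1) / (2 * n) < p \<and> p < (ln n + ln (ln n) - w2) / n"
    and s1: "2 * l / real n < 1/4" and s2: "8 * l^2 / real n < 1"
  shows "0 < p" "p \<le> 2 * l / real n" "p \<le> 1/4" "2 * (real n * p^2) \<le> 1"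
    "l / 2 < real n * p" "l + ln l + w1 < 2 * (real n * p)" "p < (l + ln l - w2) / real n"
proof -
  have l2: "2 \<le> l" unfolding l_def by (rule ln_big[OF n])
  have nn: "0 < real n" using n by simp
  have lnl: "0 \<le> ln l" "ln l \<le> l" using l2 ln_less_self[of l] by (auto, linarith)
  have lo: "(l + ln l + w1) / (2 * real n) < p" and up: "p < (l + ln l - w2) / real n"
    using H unfolding l_def by auto
  show "p < (l + ln l - w2) / real n" by (rule up)
  from lo have lo2: "l + ln l + w1 < 2 * (real n * p)" using nn by (simp add: field_simps)
  then show "l + ln l + w1 < 2 * (real n * p)" .
  show "l / 2 < real n * p" using lo2 lnl w1 by linarith
  have "0 < (l + ln l + w1) / (2 * real n)" by (rule divide_pos_pos) (use l2 lnl w1 nn in linarith)+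
  then show p0: "0 < p" using lo by linarith
  have "(l + ln l - w2) / real n \<le> 2 * l / real n"
    by (rule divide_right_mono) (use lnl w2 nn in auto)
  then show pu: "p \<le> 2 * l / real n" using up by linarith
  then show "p \<le> 1/4" using s1 by linarith
  have "p^2 \<le> (2 * l / real n)^2" by (rule power_mono[OF pu]) (use p0 in simp)
  then have "2 * (real n * p^2) \<le> 2 * (real n * (2 * l / real n)^2)"
    using nn by (intro mult_left_mono) auto
  also have "\<dots> = 8 * l^2 / real n" using nn by (simp add: power2_eq_square field_simps)
  finally show "2 * (real n * p^2) \<le> 1" using s2 by linarith
qed

theorem proposition2p5:
  fixes C :: real and p \<omega>1 \<omega>2 :: "nat \<Rightarrow> real"
  assumes "C > 0"
    and "filterlim \<omega>1 at_top sequentially"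
    and "filterlim \<omega>2 at_top sequentially"
    and "eventually (\<lambda>n. (ln n + ln (ln n) + \<omega>1 n) / (2 * n) < p n \<and>
                          p n < (ln n + ln (ln n) - \<omega>2 n) / n) sequentially"
  shows "(\<lambda>n. Gnp_prob n (p n) (\<lambda>E. real (card (leaves_not_isolated n E)) \<ge> C))
           \<longlonglongrightarrow> 1"
proof -
  define G where "G n = Gnp_prob n (p n) (\<lambda>E. real (card (leaves_not_isolated n E)) \<ge> C)" for n
  define m where "m n = real n * real (n - 1) * p n * (1 - p n)^(n - 2)" for n
  define V where "V n = (1/m n + 1/(real n * real (n - 1) * p n) + p n / (1 - p n)) / (1 - C/m n)^2" for n
  define I where "I n = exp 1 * exp (- \<omega>1 n) + exp 1 / 2 * (\<omega>1 n * exp (- \<omega>1 n))" for n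
  have ev16: "eventually (\<lambda>n. 16 \<le> n) sequentially" by (rule eventually_ge_at_top)
  have evw1: "eventually (\<lambda>n. 0 \<le> \<omega>1 n) sequentially"
    using assms(2) unfolding filterlim_at_top by blast
  have evw2: "eventually (\<lambda>n. 0 \<le> \<omega>2 n) sequentially"
    using assms(3) unfolding filterlim_at_top by blast
  have lim1: "(\<lambda>n. 2 * ln (real n) / real n) \<longlonglongrightarrow> 0" by real_asymp
  have lim2: "(\<lambda>n. 8 * ln (real n)^2 / real n) \<longlonglongrightarrow> 0" by real_asymp
  have evs1: "eventually (\<lambda>n. 2 * ln (real n) / real n < 1/4) sequentially"
    using order_tendstoD(2)[OF lim1, of "1/4"] by simp
  have evs2: "eventually (\<lambda>n. 8 * ln (real n)^2 / real n < 1) sequentially"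
    using order_tendstoD(2)[OF lim2, of 1] by simp
  have evP: "eventually (\<lambda>n. 16 \<le> n \<and> 0 \<le> \<omega>1 n \<and> 0 \<le> \<omega>2 n \<and>
      0 < p n \<and> p n \<le> 2 * ln (real n) / real n \<and> p n \<le> 1/4 \<and> 2 * (real n * p n^2) \<le> 1 \<and>
      ln (real n) / 2 < real n * p n \<and> ln (real n) + ln (ln (real n)) + \<omega>1 n < 2 * (real n * p n) \<and>
      p n < (ln (real n) + ln (ln (real n)) - \<omega>2 n) / real n) sequentially"
    using ev16 evw1 evw2 assms(4) evs1 evs2
  proof eventually_elim
    case (elim n)
    then show ?case using props[of n "\<omega>1 n" "\<omega>2 n" "p n"] by blast
  qed
  have p_lim: "p \<longlonglongrightarrow> 0"
  proof (rule tendsto_sandwich[OF _ _ tendsto_const lim1])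
    show "eventually (\<lambda>n. 0 \<le> p n) sequentially" using evP by eventually_elim auto
    show "eventually (\<lambda>n. p n \<le> 2 * ln (real n) / real n) sequentially" using evP by eventually_elim auto
  qed
  have exp_lim: "filterlim (\<lambda>n. 1 / (4 * exp 1) * exp (\<omega>2 n)) at_top sequentially"
    by (rule filterlim_tendsto_pos_mult_at_top[OF tendsto_const])
       (simp, rule filterlim_compose[OF exp_at_top assms(3)])
  have m_lim: "filterlim m at_top sequentially"
  proof (rule filterlim_at_top_mono[OF exp_lim])
    show "eventually (\<lambda>n. 1 / (4 * exp 1) * exp (\<omega>2 n) \<le> m n) sequentially"
      using evP
    proof eventually_elim
      case (elim n)
      then have "exp (\<omega>2 n) / (4 * exp 1) \<le> m n"
        unfolding m_def by (intro point_m) auto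
      then show ?case by simp
    qed
  qed
  have nkp_lim: "filterlim (\<lambda>n. real n * real (n - 1) * p n) at_top sequentially"
  proof (rule filterlim_at_top_mono)
    show "filterlim (\<lambda>n. real n - 1) at_top sequentially" by real_asymp
    show "eventually (\<lambda>n. real n - 1 \<le> real n * real (n - 1) * p n) sequentially"
      using evP
    proof eventually_elim
      case (elim n)
      then have "1 \<le> real n * p n" using ln_big[of n] by linarith
      then have "real (n - 1) * 1 \<le> real (n - 1) * (real n * p n)" by (intro mult_left_mono) auto
      moreover have "real n - 1 \<le> real (n - 1)" by simp
      ultimately show ?case by (simp add: algebra_simps)
    qed
  qed
  have V_lim: "V \<longlonglongrightarrow> 0"
  proof -
    have a: "(\<lambda>n. 1 / m n) \<longlonglongrightarrow> 0"
      by (rule tendsto_divide_0[OF tendsto_const filterlim_at_top_imp_at_infinity[OF m_lim]])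
    have b: "(\<lambda>n. C / m n) \<longlonglongrightarrow> 0"
      by (rule tendsto_divide_0[OF tendsto_const filterlim_at_top_imp_at_infinity[OF m_lim]])
    have c: "(\<lambda>n. 1 / (real n * real (n - 1) * p n)) \<longlonglongrightarrow> 0"
      by (rule tendsto_divide_0[OF tendsto_const filterlim_at_top_imp_at_infinity[OF nkp_lim]])
    have d: "(\<lambda>n. p n / (1 - p n)) \<longlonglongrightarrow> 0 / (1 - 0)"
      by (intro tendsto_intros p_lim) simp
    have "V \<longlonglongrightarrow> (0 + 0 + 0 / (1 - 0)) / (1 - 0)^2"
      unfolding V_def by (intro tendsto_intros a b c d) simp
    then show ?thesis by simp
  qed
  have I_lim: "I \<longlonglongrightarrow> 0"
  proof -
    have e1: "((\<lambda>x::real. exp (- x)) \<longlongrightarrow> 0) at_top" by real_asymp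
    have e2: "((\<lambda>x::real. x * exp (- x)) \<longlongrightarrow> 0) at_top" by real_asymp
    have "(\<lambda>n. exp (- \<omega>1 n)) \<longlonglongrightarrow> 0" by (rule filterlim_compose[OF e1 assms(2)])
    moreover have "(\<lambda>n. \<omega>1 n * exp (- \<omega>1 n)) \<longlonglongrightarrow> 0" by (rule filterlim_compose[OF e2 assms(2)])
    ultimately have "I \<longlonglongrightarrow> exp 1 * 0 + exp 1 / 2 * 0"
      unfolding I_def by (intro tendsto_intros)
    then show ?thesis by simp
  qed
  have evC: "eventually (\<lambda>n. C + 1 \<le> m n) sequentially"
    using m_lim unfolding filterlim_at_top by blast
  have lower: "eventually (\<lambda>n. 1 - (V n + I n) \<le> G n) sequentially"
    using evP evC
  proof eventually_elim
    case (elim n)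
    have n3: "3 \<le> n" using elim by simp
    have p0: "0 < p n" and p1: "p n < 1" using elim by auto
    have Cm: "C < m n" using elim by simp
    have b1: "1 - (sb - (m n)^2) / (m n - C)^2 - real n ^ 2 * (p n * (1 - p n)^(2*n-4)) \<le> G n"
      if "sb = m n + real n * real (n - 1) * (p n * (1 - p n)^(2*n-4) + real ((n-2)*(n-2)) * (p n^2 * (1 - p n)^(2*n-5)))" for sb
      unfolding G_def that using per_n_bound[OF n3, of "p n" C] p0 p1 Cm unfolding m_def by simp
    have b2: "(sb - (m n)^2) / (m n - C)^2 \<le> V n"
      if "sb = m n + real n * real (n - 1) * (p n * (1 - p n)^(2*n-4) + real ((n-2)*(n-2)) * (p n^2 * (1 - p n)^(2*n-5)))" for sb
      unfolding V_def that using var_bound[OF n3 p0 p1, of C] Cm unfolding m_def by simp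
    have b3: "real n ^ 2 * (p n * (1 - p n)^(2*n-4)) \<le> I n"
      unfolding I_def by (rule point_iso) (use elim in auto)
    show ?case using b1[OF refl] b2[OF refl] b3 by linarith
  qed
  have upper: "eventually (\<lambda>n. G n \<le> 1) sequentially"
    using evP
  proof eventually_elim
    case (elim n)
    then show ?case unfolding G_def Gnp_Pr by (intro Pr_le1 finite_all_edges) auto
  qed
  have "(\<lambda>n. 1 - (V n + I n)) \<longlonglongrightarrow> 1 - (0 + 0)"
    by (intro tendsto_intros V_lim I_lim)
  then have "(\<lambda>n. 1 - (V n + I n)) \<longlonglongrightarrow> 1" by simp
  then have "G \<longlonglongrightarrow> 1" by (rule tendsto_sandwich[OF lower upper _ tendsto_const])
  then show ?thesis unfolding G_def .
qed

end
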